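(* Let $D$ be a digraph with $\chi(D)>\omega$. Then there is a subdigraph $D_0\subseteq D$ with $\chi(D_0)>\omega$ such that every vertex of $D_0$ has infinite in-degree and infinite out-degree in $D_0$.
   Context: A digraph is a pair $D=(V,E)$ with $E\subseteq V^2$ such that $uv\in E$ implies $vu\notin E$. The dichromatic number $\chi(D)$ is the minimal number of acyclic vertex sets (sets inducing no directed cycle) needed to cover the vertex set of $D$. *)

theory Defs
  imports Main "HOL-Library.Countable_Set"
begin

definition digraph :: "'a set \<Rightarrow> ('a \<times> 'a) set \<Rightarrow> bool" where
  "digraph V E \<longleftrightarrow> E \<subseteq> V \<times> V \<and> (\<forall>u v. (u, v) \<in> E \<longrightarrow> (v, u) \<notin> E)"

definition acyclic_set :: "'a set \<Rightarrow> ('a \<times> 'a) set \<Rightarrow> 'a set \<Rightarrow> bool" where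
  "acyclic_set V E A \<longleftrightarrow> A \<subseteq> V \<and> acyclic (E \<inter> (A \<times> A))"

definition dichromatic_le_omega :: "'a set \<Rightarrow> ('a \<times> 'a) set \<Rightarrow> bool" where
  "dichromatic_le_omega V E \<longleftrightarrow>
     (\<exists>C. countable C \<and> (\<forall>A\<in>C. acyclic_set V E A) \<and> V \<subseteq> \<Union>C)"

definition subdigraph :: "'a set \<Rightarrow> ('a \<times> 'a) set \<Rightarrow> 'a set \<Rightarrow> ('a \<times> 'a) set \<Rightarrow> bool" where
  "subdigraph V0 E0 V E \<longleftrightarrow> digraph V0 E0 \<and> V0 \<subseteq> V \<and> E0 \<subseteq> E"

definition in_nbrs :: "('a \<times> 'a) set \<Rightarrow> 'a \<Rightarrow> 'a set" where
  "in_nbrs E v = {u. (u, v) \<in> E}"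

definition out_nbrs :: "('a \<times> 'a) set \<Rightarrow> 'a \<Rightarrow> 'a set" where
  "out_nbrs E v = {w. (v, w) \<in> E}"

end

theory Submission
  imports Defs
begin

lemma trancl_finite_support:
  assumes "(a,b) \<in> r\<^sup>+" shows "\<exists>F. finite F \<and> (a,b) \<in> (r \<inter> F\<times>F)\<^sup>+"
  using assms
proof (induction rule: trancl_induct)
  case (base y)
  have "(a,y) \<in> r \<inter> {a,y}\<times>{a,y}" using base by blast
  then have "(a,y) \<in> (r \<inter> {a,y}\<times>{a,y})\<^sup>+" by (rule r_into_trancl)
  then show ?case by (meson finite.emptyI finite.insertI)
next
  case (step y z)
  then obtain F where F: "finite F" "(a,y) \<in> (r \<inter> F\<times>F)\<^sup>+" by blast
  let ?G = "insert z (insert y F)"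
  have sub: "r \<inter> F\<times>F \<subseteq> r \<inter> ?G\<times>?G" by blast
  have "(a,y) \<in> (r \<inter> ?G\<times>?G)\<^sup>+"
    using trancl_mono[OF F(2) sub] .
  moreover have "(y,z) \<in> r \<inter> ?G\<times>?G" using step(2) by blast
  ultimately have "(a,z) \<in> (r \<inter> ?G\<times>?G)\<^sup>+" by (rule trancl_into_trancl)
  moreover have "finite ?G" using F(1) by blast
  ultimately show ?case by blast
qed

lemma trancl_avoid:
  assumes "(a,b) \<in> r\<^sup>+" "b \<noteq> v" "\<forall>y. (v,y) \<notin> r"
  shows "(a,b) \<in> (r \<inter> (-{v})\<times>(-{v}))\<^sup>+"
  using assms(1,2)
proof (induction rule: trancl_induct)
  case (base y)
  have "a \<noteq> v" using base(1) assms(3) by blast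
  then have "(a,y) \<in> r \<inter> (-{v})\<times>(-{v})" using base by blast
  then show ?case by (rule r_into_trancl)
next
  case (step y z)
  have "y \<noteq> v" using step(2) assms(3) by blast
  then have "(a,y) \<in> (r \<inter> (-{v})\<times>(-{v}))\<^sup>+" using step by blast
  moreover have "(y,z) \<in> r \<inter> (-{v})\<times>(-{v})" using step \<open>y\<noteq>v\<close> by blast
  ultimately show ?case by (rule trancl_into_trancl)
qed

definition goodcol :: "('a\<times>'a) set \<Rightarrow> nat \<Rightarrow> 'a set \<Rightarrow> ('a \<Rightarrow> nat) \<Rightarrow> bool" where
  "goodcol E k F c \<longleftrightarrow> (\<forall>x\<in>F. c x \<le> k) \<and> (\<forall>j. acyclic (E \<inter> ({x\<in>F. c x = j} \<times> {x\<in>F. c x = j})))"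

lemma goodcol_mono:
  assumes "goodcol E k F c" "G \<subseteq> F" shows "goodcol E k G c"
proof -
  have 1: "\<forall>x\<in>F. c x \<le> k" and 2: "\<forall>j. acyclic (E \<inter> ({x\<in>F. c x = j} \<times> {x\<in>F. c x = j}))"
    using assms(1) by (auto simp: goodcol_def)
  have "\<forall>j. acyclic (E \<inter> ({x\<in>G. c x = j} \<times> {x\<in>G. c x = j}))"
  proof
    fix j
    have "E \<inter> ({x\<in>G. c x = j} \<times> {x\<in>G. c x = j}) \<subseteq> E \<inter> ({x\<in>F. c x = j} \<times> {x\<in>F. c x = j})"
      using assms(2) by blast
    then show "acyclic (E \<inter> ({x\<in>G. c x = j} \<times> {x\<in>G. c x = j}))" using 2 acyclic_subset by blast
  qed
  then show ?thesis using 1 assms(2) by (auto simp: goodcol_def)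
qed

lemma least_exists:
  assumes "finite F" "F \<noteq> {}" "\<forall>v\<in>F. \<forall>w\<in>F. D v \<subseteq> D w \<or> D w \<subseteq> D v"
  shows "\<exists>v\<in>F. \<forall>s\<in>F. D v \<subseteq> D s"
  using assms
proof (induction F rule: finite_ne_induct)
  case (singleton x) then show ?case by auto
next
  case (insert x F)
  then obtain v where v: "v \<in> F" "\<forall>s\<in>F. D v \<subseteq> D s" by auto
  show ?case
  proof (cases "D x \<subseteq> D v")
    case True then show ?thesis using v by auto
  next
    case False then have "D v \<subseteq> D x" using insert.prems v by auto
    then show ?thesis using v by auto
  qed
qed

lemma greedy:
  assumes noloop: "\<forall>v. (v,v) \<notin> E"
   and lin: "\<forall>v\<in>L. \<forall>w\<in>L. D v \<subseteq> D w \<or> D w \<subseteq> D v"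
   and cons: "\<forall>v\<in>L. \<forall>w\<in>L. v \<in> D w \<longrightarrow> D v \<subseteq> D w"
   and inj: "\<forall>v\<in>L. \<forall>w\<in>L. D v = D w \<longrightarrow> v = w"
   and bound: "\<forall>v\<in>L. finite {s\<in>L. (v,s)\<in>E \<and> s \<notin> D v} \<and> card {s\<in>L. (v,s)\<in>E \<and> s \<notin> D v} \<le> k"
   and fin: "finite F"
  shows "F \<subseteq> L \<longrightarrow> (\<exists>c. goodcol E k F c)"
  using fin
proof (induction F rule: finite_remove_induct)
  case empty then show ?case by (auto simp: goodcol_def acyclic_def)
next
  case (remove F)
  show ?case
  proof
    assume FL: "F \<subseteq> L"
    have linF: "\<forall>v\<in>F. \<forall>w\<in>F. D v \<subseteq> D w \<or> D w \<subseteq> D v" using lin FL by blast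
    obtain v where v: "v \<in> F" "\<forall>s\<in>F. D v \<subseteq> D s"
      using least_exists[OF remove.hyps(1) remove.hyps(2) linF] by blast
    have vL: "v \<in> L" using v FL by blast
    have FvL: "F - {v} \<subseteq> L" using FL by blast
    obtain c' where c': "goodcol E k (F - {v}) c'" using remove.IH[OF v(1)] FvL by blast
    define N where "N = {s \<in> F - {v}. (v,s) \<in> E}"
    have NS: "N \<subseteq> {s\<in>L. (v,s)\<in>E \<and> s \<notin> D v}"
    proof
      fix s assume s: "s \<in> N"
      then have sF: "s \<in> F" "s \<noteq> v" "(v,s) \<in> E" by (auto simp: N_def)
      have sL: "s \<in> L" using sF(1) FL by blast
      have "s \<notin> D v"
      proof
        assume "s \<in> D v"
        then have "D s \<subseteq> D v" using cons sL vL by blast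
        moreover have "D v \<subseteq> D s" using v(2) sF(1) by blast
        ultimately have "D s = D v" by (rule subset_antisym)
        then have "s = v" using inj sL vL by blast
        then show False using sF(2) by blast
      qed
      then show "s \<in> {s\<in>L. (v,s)\<in>E \<and> s \<notin> D v}" using sF sL by blast
    qed
    have bv: "finite {s\<in>L. (v,s)\<in>E \<and> s \<notin> D v}" "card {s\<in>L. (v,s)\<in>E \<and> s \<notin> D v} \<le> k"
      using bound vL by auto
    have cN: "card N \<le> k" using card_mono[OF bv(1) NS] bv(2) by linarith
    have fN: "finite N" using NS bv(1) by (rule finite_subset)
    have ck: "card (c' ` N) \<le> k" using cN card_image_le[OF fN, of c'] by linarith
    have "\<not> {..k} \<subseteq> c' ` N"
    proof
      assume "{..k} \<subseteq> c' ` N"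
      then have "card {..k} \<le> card (c' ` N)" using card_mono[OF finite_imageI[OF fN]] by blast
      then show False using ck by simp
    qed
    then obtain j where j: "j \<le> k" "j \<notin> c' ` N" by auto
    define c where "c = c'(v := j)"
    have "goodcol E k F c"
      unfolding goodcol_def
    proof (intro conjI allI ballI)
      fix x assume "x \<in> F" then show "c x \<le> k" using c' j by (auto simp: c_def goodcol_def)
    next
      fix i
      show "acyclic (E \<inter> ({x\<in>F. c x = i} \<times> {x\<in>F. c x = i}))"
      proof (cases "i = j")
        case False
        then have "{x\<in>F. c x = i} = {x\<in>F-{v}. c' x = i}" by (auto simp: c_def)
        then show ?thesis using c' by (simp add: goodcol_def)
      next
        case True
        define A' where "A' = {x\<in>F-{v}. c' x = j}"
        define r where "r = E \<inter> ({x\<in>F. c x = i} \<times> {x\<in>F. c x = i})"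
        have nout: "\<forall>y. (v,y) \<notin> r"
        proof (intro allI notI)
          fix y assume "(v,y) \<in> r"
          then have y: "(v,y) \<in> E" "y \<in> F" "c y = j" by (auto simp: r_def True)
          then have "y \<noteq> v" using noloop by blast
          then have "y \<in> N" "c' y = j" using y by (auto simp: N_def c_def)
          then show False using j by blast
        qed
        have sub: "r \<inter> (-{v})\<times>(-{v}) \<subseteq> E \<inter> A' \<times> A'"
          by (auto simp: r_def A'_def c_def True)
        have acA: "acyclic (E \<inter> A' \<times> A')" using c' by (simp add: goodcol_def A'_def)
        have "acyclic r"
          unfolding acyclic_def
        proof (intro allI notI)
          fix x assume xx: "(x,x) \<in> r\<^sup>+"
          show False
          proof (cases "x = v")
            case True
            then show False using xx nout by (meson tranclD)
          next
            case False
            then have "(x,x) \<in> (r \<inter> (-{v})\<times>(-{v}))\<^sup>+" using trancl_avoid[OF xx _ nout] by blast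
            then have "(x,x) \<in> (E \<inter> A' \<times> A')\<^sup>+" using sub trancl_mono by blast
            then show False using acA by (simp add: acyclic_def)
          qed
        qed
        then show ?thesis by (simp add: r_def)
      qed
    qed
    then show "\<exists>c. goodcol E k F c" by blast
  qed
qed

lemma chain_finite_sub:
  assumes "finite Q" shows "Q \<subseteq> \<Union>C \<Longrightarrow> C \<noteq> {} \<Longrightarrow> (\<forall>a\<in>C. \<forall>b\<in>C. a \<subseteq> b \<or> b \<subseteq> a) \<Longrightarrow> \<exists>p\<in>C. Q \<subseteq> p"
  using assms
proof (induction Q rule: finite_induct)
  case empty then show ?case by blast
next
  case (insert q Q)
  then obtain p where p: "p \<in> C" "Q \<subseteq> p" by blast
  obtain p' where p': "p' \<in> C" "q \<in> p'" using insert.prems by blast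
  have "p \<subseteq> p' \<or> p' \<subseteq> p" using insert.prems(3) p(1) p'(1) by blast
  then show ?case using p p' by blast
qed

definition agree :: "('a \<times> nat) set \<Rightarrow> 'a set \<Rightarrow> ('a \<Rightarrow> nat) \<Rightarrow> bool" where
  "agree p F c \<longleftrightarrow> (\<forall>x j. (x,j)\<in>p \<longrightarrow> x\<in>F \<longrightarrow> c x = j)"

definition fc :: "('a\<times>'a) set \<Rightarrow> nat \<Rightarrow> 'a set \<Rightarrow> ('a \<times> nat) set \<Rightarrow> bool" where
  "fc E k L p \<longleftrightarrow> (\<forall>F. finite F \<longrightarrow> F \<subseteq> L \<longrightarrow> (\<exists>c. goodcol E k F c \<and> agree p F c))"

definition sv :: "('a \<times> nat) set \<Rightarrow> bool" where
  "sv p \<longleftrightarrow> (\<forall>x i j. (x,i)\<in>p \<longrightarrow> (x,j)\<in>p \<longrightarrow> i = j)"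

lemma compactness:
  assumes fin: "\<forall>F. finite F \<and> F \<subseteq> L \<longrightarrow> (\<exists>c. goodcol E k F c)"
  shows "\<exists>c. goodcol E k L c"
proof -
  define P where "P = {p. p \<subseteq> L \<times> {..k} \<and> sv p \<and> fc E k L p}"
  have "\<forall>C\<in>chains P. \<Union>C \<in> P"
  proof
    fix C assume C: "C \<in> chains P"
    have CP: "C \<subseteq> P" using C by (rule chainsD2)
    have ch: "\<forall>a\<in>C. \<forall>b\<in>C. a \<subseteq> b \<or> b \<subseteq> a" using C chainsD by blast
    have s1: "\<Union>C \<subseteq> L \<times> {..k}" using CP unfolding P_def by blast
    have svC: "\<forall>p\<in>C. sv p" using CP unfolding P_def by blast
    have fcC: "\<forall>p\<in>C. fc E k L p" using CP unfolding P_def by blast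
    have s2: "sv (\<Union>C)"
      unfolding sv_def
    proof (intro allI impI)
      fix x i j assume "(x,i)\<in>\<Union>C" "(x,j)\<in>\<Union>C"
      then obtain a b where ab: "a\<in>C" "b\<in>C" "(x,i)\<in>a" "(x,j)\<in>b" by blast
      have "a \<subseteq> b \<or> b \<subseteq> a" using ch ab(1,2) by blast
      then show "i = j"
      proof
        assume "a \<subseteq> b" then show "i = j" using svC ab unfolding sv_def by blast
      next
        assume "b \<subseteq> a" then show "i = j" using svC ab unfolding sv_def by blast
      qed
    qed
    have s3: "fc E k L (\<Union>C)"
      unfolding fc_def
    proof (intro allI impI)
      fix F assume F: "finite F" "F \<subseteq> L"
      show "\<exists>c. goodcol E k F c \<and> agree (\<Union>C) F c"
      proof (cases "C = {}")
        case True then show ?thesis using fin F by (auto simp: agree_def)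
      next
        case False
        define Q where "Q = {q \<in> \<Union>C. fst q \<in> F}"
        have "Q \<subseteq> F \<times> {..k}" using s1 by (auto simp: Q_def)
        then have "finite Q" using F by (meson finite_SigmaI finite_atMost finite_subset)
        moreover have "Q \<subseteq> \<Union>C" by (auto simp: Q_def)
        ultimately obtain p where p: "p \<in> C" "Q \<subseteq> p"
          using chain_finite_sub[of Q C] False ch by blast
        then have "fc E k L p" using fcC by blast
        then obtain c where c: "goodcol E k F c" "agree p F c"
          using F unfolding fc_def by blast
        have "agree (\<Union>C) F c"
          using c(2) p(2) unfolding agree_def Q_def by fastforce
        then show ?thesis using c(1) by blast
      qed
    qed
    show "\<Union>C \<in> P" using s1 s2 s3 unfolding P_def by blast
  qed
  then obtain M where M: "M \<in> P" "\<forall>X\<in>P. M \<subseteq> X \<longrightarrow> X = M" using Zorn_Lemma by blast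
  have M1: "M \<subseteq> L \<times> {..k}" and M2: "sv M" and M3: "fc E k L M" using M(1) unfolding P_def by blast+
  have tot: "\<forall>x\<in>L. \<exists>j. (x,j) \<in> M"
  proof (rule ccontr)
    assume "\<not> (\<forall>x\<in>L. \<exists>j. (x,j) \<in> M)"
    then obtain x where x: "x \<in> L" "\<forall>j. (x,j) \<notin> M" by blast
    have "\<forall>j\<in>{..k}. \<exists>F. finite F \<and> F \<subseteq> L \<and> \<not> (\<exists>c. goodcol E k F c \<and> agree (insert (x,j) M) F c)"
    proof
      fix j assume j: "j \<in> {..k}"
      have "insert (x,j) M \<noteq> M" using x by blast
      then have n: "insert (x,j) M \<notin> P" using M(2) by blast
      have a: "insert (x,j) M \<subseteq> L \<times> {..k}" using M1 x j by blast
      have b: "sv (insert (x,j) M)" using M2 x unfolding sv_def by blast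
      have "\<not> fc E k L (insert (x,j) M)" using n a b unfolding P_def by blast
      then show "\<exists>F. finite F \<and> F \<subseteq> L \<and> \<not> (\<exists>c. goodcol E k F c \<and> agree (insert (x,j) M) F c)"
        unfolding fc_def by blast
    qed
    from bchoice[OF this] obtain Fs where Fs: "\<forall>j\<in>{..k}. finite (Fs j) \<and> Fs j \<subseteq> L \<and> \<not> (\<exists>c. goodcol E k (Fs j) c \<and> agree (insert (x,j) M) (Fs j) c)"
      by blast
    define G where "G = insert x (\<Union>j\<in>{..k}. Fs j)"
    have G: "finite G" "G \<subseteq> L" using Fs x by (auto simp: G_def)
    then obtain c where c: "goodcol E k G c" "agree M G c"
      using M3 unfolding fc_def by blast
    define j where "j = c x"
    have j: "j \<in> {..k}" using c(1) by (auto simp: goodcol_def G_def j_def)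
    have sub: "Fs j \<subseteq> G" using j by (auto simp: G_def)
    have "goodcol E k (Fs j) c" using goodcol_mono[OF c(1) sub] .
    moreover have "agree (insert (x,j) M) (Fs j) c"
      using c(2) sub unfolding agree_def j_def by blast
    ultimately show False using Fs j by blast
  qed
  define c where "c y = (SOME j. (y,j) \<in> M)" for y
  have cM: "\<forall>y\<in>L. (y, c y) \<in> M" using tot unfolding c_def by (metis someI_ex)
  have "goodcol E k L c"
    unfolding goodcol_def
  proof (intro conjI allI ballI)
    fix y assume "y \<in> L"
    have "(y, c y) \<in> M" using cM \<open>y \<in> L\<close> by (rule bspec)
    then have "(y, c y) \<in> L \<times> {..k}" using M1 by (rule rev_subsetD)
    then show "c y \<le> k" by simp
  next
    fix j
    define A where "A = {x\<in>L. c x = j}"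
    show "acyclic (E \<inter> ({x\<in>L. c x = j} \<times> {x\<in>L. c x = j}))"
      unfolding acyclic_def A_def[symmetric]
    proof (intro allI notI)
      fix x assume "(x,x) \<in> (E \<inter> A \<times> A)\<^sup>+"
      from trancl_finite_support[OF this] obtain F where F: "finite F" "(x,x) \<in> (E \<inter> A \<times> A \<inter> F \<times> F)\<^sup>+"
        by blast
      define G where "G = F \<inter> A"
      have G: "finite G" "G \<subseteq> L" using F(1) unfolding G_def A_def by auto
      then obtain c' where c': "goodcol E k G c'" "agree M G c'"
        using M3 unfolding fc_def by blast
      have eq: "\<forall>y\<in>G. c' y = j"
      proof
        fix y assume y: "y \<in> G"
        then have "(y, c y) \<in> M" using cM G(2) by blast
        then have "c' y = c y" using c'(2) y unfolding agree_def by blast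
        then show "c' y = j" using y unfolding G_def A_def by simp
      qed
      have sub: "E \<inter> A \<times> A \<inter> F \<times> F \<subseteq> E \<inter> ({y\<in>G. c' y = j} \<times> {y\<in>G. c' y = j})"
        using eq unfolding G_def by blast
      have "(x,x) \<in> (E \<inter> ({y\<in>G. c' y = j} \<times> {y\<in>G. c' y = j}))\<^sup>+"
        using trancl_mono[OF F(2) sub] .
      moreover have "acyclic (E \<inter> ({y\<in>G. c' y = j} \<times> {y\<in>G. c' y = j}))"
        using c'(1) unfolding goodcol_def by blast
      ultimately show False unfolding acyclic_def by (meson)
    qed
  qed
  then show ?thesis by blast
qed

definition fincond :: "('a\<times>'a) set \<Rightarrow> 'a set \<Rightarrow> 'a \<Rightarrow> 'a set \<Rightarrow> bool" where
  "fincond E W v X \<longleftrightarrow> finite (out_nbrs E v \<inter> (W - (X - {v}))) \<or> finite (in_nbrs E v \<inter> (W - (X - {v})))"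

definition pw :: "('a \<times> 'a set) set \<Rightarrow> bool" where
  "pw \<sigma> \<longleftrightarrow> (\<forall>v X w Y. (v,X)\<in>\<sigma> \<longrightarrow> (w,Y)\<in>\<sigma> \<longrightarrow>
      (v = w \<longrightarrow> X = Y) \<and> (X = Y \<longrightarrow> v = w) \<and> (X \<subseteq> Y \<or> Y \<subseteq> X) \<and> (v \<in> Y \<longrightarrow> X \<subseteq> Y))"

definition loc :: "('a\<times>'a) set \<Rightarrow> 'a set \<Rightarrow> ('a \<times> 'a set) set \<Rightarrow> bool" where
  "loc E W \<sigma> \<longleftrightarrow> (\<forall>v X. (v,X)\<in>\<sigma> \<longrightarrow> v \<in> X \<and> X \<subseteq> fst ` \<sigma> \<and> fincond E W v X)"

lemma order_exists:
  assumes hered: "\<forall>S. S \<subseteq> W \<longrightarrow> S \<noteq> {} \<longrightarrow> (\<exists>u\<in>S. finite (out_nbrs E u \<inter> S) \<or> finite (in_nbrs E u \<inter> S))"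
  shows "\<exists>M. pw M \<and> loc E W M \<and> fst ` M = W"
proof -
  define Q where "Q = {\<sigma>. \<sigma> \<subseteq> W \<times> UNIV \<and> pw \<sigma> \<and> loc E W \<sigma>}"
  have "\<forall>C\<in>chains Q. \<Union>C \<in> Q"
  proof
    fix C assume C: "C \<in> chains Q"
    have CQ: "C \<subseteq> Q" using C by (rule chainsD2)
    have ch: "\<forall>a\<in>C. \<forall>b\<in>C. a \<subseteq> b \<or> b \<subseteq> a" using C chainsD by blast
    have s1: "\<Union>C \<subseteq> W \<times> UNIV" using CQ unfolding Q_def by blast
    have pwC: "\<forall>p\<in>C. pw p" using CQ unfolding Q_def by blast
    have locC: "\<forall>p\<in>C. loc E W p" using CQ unfolding Q_def by blast
    have s2: "pw (\<Union>C)"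
      unfolding pw_def
    proof (intro allI impI)
      fix v X w Y assume "(v,X)\<in>\<Union>C" "(w,Y)\<in>\<Union>C"
      then obtain a b where ab: "a\<in>C" "b\<in>C" "(v,X)\<in>a" "(w,Y)\<in>b" by blast
      have "a \<subseteq> b \<or> b \<subseteq> a" using ch ab(1,2) by blast
      then obtain p where p: "p \<in> C" "(v,X)\<in>p" "(w,Y)\<in>p" using ab by blast
      have "pw p" using pwC p(1) by blast
      then show "(v = w \<longrightarrow> X = Y) \<and> (X = Y \<longrightarrow> v = w) \<and> (X \<subseteq> Y \<or> Y \<subseteq> X) \<and> (v \<in> Y \<longrightarrow> X \<subseteq> Y)"
        using p(2,3) unfolding pw_def by blast
    qed
    have s3: "loc E W (\<Union>C)"
      unfolding loc_def
    proof (intro allI impI)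
      fix v X assume "(v,X)\<in>\<Union>C"
      then obtain p where p: "p \<in> C" "(v,X) \<in> p" by blast
      have "loc E W p" using locC p(1) by blast
      then have "v \<in> X \<and> X \<subseteq> fst ` p \<and> fincond E W v X" using p(2) unfolding loc_def by blast
      moreover have "fst ` p \<subseteq> fst ` (\<Union>C)" using p(1) by blast
      ultimately show "v \<in> X \<and> X \<subseteq> fst ` (\<Union>C) \<and> fincond E W v X" by blast
    qed
    show "\<Union>C \<in> Q" using s1 s2 s3 unfolding Q_def by blast
  qed
  then obtain M where M: "M \<in> Q" "\<forall>X\<in>Q. M \<subseteq> X \<longrightarrow> X = M" using Zorn_Lemma by blast
  have M1: "M \<subseteq> W \<times> UNIV" and M2: "pw M" and M3: "loc E W M" using M(1) unfolding Q_def by blast+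
  define A where "A = fst ` M"
  have AW: "A \<subseteq> W" using M1 unfolding A_def by auto
  have "A = W"
  proof (rule ccontr)
    assume "A \<noteq> W"
    then have "W - A \<subseteq> W" "W - A \<noteq> {}" using AW by auto
    then obtain u where u: "u \<in> W - A" "finite (out_nbrs E u \<inter> (W - A)) \<or> finite (in_nbrs E u \<inter> (W - A))"
      using hered by blast
    define M' where "M' = insert (u, insert u A) M"
    have old: "\<forall>w Y. (w,Y)\<in>M \<longrightarrow> w \<in> A \<and> Y \<subseteq> A" using M3 unfolding loc_def A_def by force
    have uA: "u \<notin> A" using u by blast
    have eqS: "W - (insert u A - {u}) = W - A" using uA by blast
    have a: "M' \<subseteq> W \<times> UNIV" using M1 u unfolding M'_def by blast
    have b: "pw M'"
      unfolding pw_def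
    proof (intro allI impI)
      fix v X w Y assume vX: "(v,X)\<in>M'" and wY: "(w,Y)\<in>M'"
      show "(v = w \<longrightarrow> X = Y) \<and> (X = Y \<longrightarrow> v = w) \<and> (X \<subseteq> Y \<or> Y \<subseteq> X) \<and> (v \<in> Y \<longrightarrow> X \<subseteq> Y)"
      proof (cases "(v,X) \<in> M")
        case vM: True
        show ?thesis
        proof (cases "(w,Y) \<in> M")
          case True then show ?thesis using vM M2 unfolding pw_def by blast
        next
          case False
          then have "w = u" "Y = insert u A" using wY unfolding M'_def by auto
          then show ?thesis using old vM uA by blast
        qed
      next
        case vN: False
        then have vv: "v = u" "X = insert u A" using vX unfolding M'_def by auto
        show ?thesis
        proof (cases "(w,Y) \<in> M")
          case True then show ?thesis using old vv uA by blast
        next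
          case False
          then have "w = u" "Y = insert u A" using wY unfolding M'_def by auto
          then show ?thesis using vv by blast
        qed
      qed
    qed
    have c: "loc E W M'"
      unfolding loc_def
    proof (intro allI impI)
      fix v X assume vX: "(v,X)\<in>M'"
      have fsub: "fst ` M \<subseteq> fst ` M'" unfolding M'_def by auto
      show "v \<in> X \<and> X \<subseteq> fst ` M' \<and> fincond E W v X"
      proof (cases "(v,X) \<in> M")
        case True
        then have "v \<in> X \<and> X \<subseteq> fst ` M \<and> fincond E W v X" using M3 unfolding loc_def by blast
        then show ?thesis using fsub by blast
      next
        case False
        then have vv: "v = u" "X = insert u A" using vX unfolding M'_def by auto
        have "X \<subseteq> fst ` M'" unfolding vv M'_def A_def by auto
        moreover have "fincond E W v X" unfolding fincond_def vv eqS using u(2) .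
        ultimately show ?thesis using vv by blast
      qed
    qed
    have "M' \<in> Q" using a b c unfolding Q_def by blast
    moreover have "M \<subseteq> M'" unfolding M'_def by blast
    ultimately have "M' = M" using M(2) by blast
    then have "(u, insert u A) \<in> M" unfolding M'_def by blast
    then have "u \<in> A" unfolding A_def by force
    then show False using uA by blast
  qed
  then show ?thesis using M2 M3 unfolding A_def by blast
qed

lemma layer_col:
  assumes noloop: "\<forall>v. (v,v) \<notin> E"
   and lin: "\<forall>v\<in>L. \<forall>w\<in>L. D v \<subseteq> D w \<or> D w \<subseteq> D v"
   and cons: "\<forall>v\<in>L. \<forall>w\<in>L. v \<in> D w \<longrightarrow> D v \<subseteq> D w"
   and inj: "\<forall>v\<in>L. \<forall>w\<in>L. D v = D w \<longrightarrow> v = w"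
   and bound: "\<forall>v\<in>L. finite {s\<in>L. (v,s)\<in>E \<and> s \<notin> D v} \<and> card {s\<in>L. (v,s)\<in>E \<and> s \<notin> D v} \<le> k"
  shows "\<exists>c. goodcol E k L c"
proof (rule compactness)
  show "\<forall>F. finite F \<and> F \<subseteq> L \<longrightarrow> (\<exists>c. goodcol E k F c)"
    using greedy[OF noloop lin cons inj bound] by blast
qed

lemma hered_colorable:
  assumes noloop: "\<forall>v. (v,v) \<notin> E"
    and hered: "\<forall>S. S \<subseteq> W \<longrightarrow> S \<noteq> {} \<longrightarrow> (\<exists>u\<in>S. finite (out_nbrs E u \<inter> S) \<or> finite (in_nbrs E u \<inter> S))"
  shows "\<exists>C. countable C \<and> (\<forall>A\<in>C. A \<subseteq> W \<and> acyclic (E \<inter> A \<times> A)) \<and> W \<subseteq> \<Union>C"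
proof -
  obtain M where M: "pw M" "loc E W M" "fst ` M = W" using order_exists[OF hered] by blast
  define D where "D v = (SOME X. (v,X) \<in> M)" for v
  have vD: "\<forall>v\<in>W. (v, D v) \<in> M"
  proof
    fix v assume "v \<in> W"
    then have "\<exists>X. (v,X) \<in> M" using M(3) by force
    then show "(v, D v) \<in> M" unfolding D_def by (rule someI_ex)
  qed
  have lin: "\<forall>v\<in>W. \<forall>w\<in>W. D v \<subseteq> D w \<or> D w \<subseteq> D v"
    and cons: "\<forall>v\<in>W. \<forall>w\<in>W. v \<in> D w \<longrightarrow> D v \<subseteq> D w"
    and inj: "\<forall>v\<in>W. \<forall>w\<in>W. D v = D w \<longrightarrow> v = w"
    using vD M(1) unfolding pw_def by blast+
  have fc: "\<forall>v\<in>W. fincond E W v (D v)" using vD M(2) unfolding loc_def by blast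
  define fw where "fw v = W - (D v - {v})" for v
  define Lo where "Lo k = {v\<in>W. finite (out_nbrs E v \<inter> fw v) \<and> card (out_nbrs E v \<inter> fw v) \<le> k}" for k
  define Li where "Li k = {v\<in>W. finite (in_nbrs E v \<inter> fw v) \<and> card (in_nbrs E v \<inter> fw v) \<le> k}" for k
  have "\<forall>k. \<exists>c. goodcol E k (Lo k) c"
  proof
    fix k
    have LW: "Lo k \<subseteq> W" unfolding Lo_def by blast
    show "\<exists>c. goodcol E k (Lo k) c"
    proof (rule layer_col[OF noloop])
      show "\<forall>v\<in>Lo k. \<forall>w\<in>Lo k. D v \<subseteq> D w \<or> D w \<subseteq> D v" using lin LW by blast
      show "\<forall>v\<in>Lo k. \<forall>w\<in>Lo k. v \<in> D w \<longrightarrow> D v \<subseteq> D w" using cons LW by blast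
      show "\<forall>v\<in>Lo k. \<forall>w\<in>Lo k. D v = D w \<longrightarrow> v = w" using inj LW by blast
      show "\<forall>v\<in>Lo k. finite {s\<in>Lo k. (v,s)\<in>E \<and> s \<notin> D v} \<and> card {s\<in>Lo k. (v,s)\<in>E \<and> s \<notin> D v} \<le> k"
      proof
        fix v assume v: "v \<in> Lo k"
        have sub: "{s\<in>Lo k. (v,s)\<in>E \<and> s \<notin> D v} \<subseteq> out_nbrs E v \<inter> fw v"
          unfolding fw_def out_nbrs_def using LW by blast
        have f: "finite (out_nbrs E v \<inter> fw v)" "card (out_nbrs E v \<inter> fw v) \<le> k" using v unfolding Lo_def by blast+
        show "finite {s\<in>Lo k. (v,s)\<in>E \<and> s \<notin> D v} \<and> card {s\<in>Lo k. (v,s)\<in>E \<and> s \<notin> D v} \<le> k"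
          using finite_subset[OF sub f(1)] card_mono[OF f(1) sub] f(2) by linarith
      qed
    qed
  qed
  then obtain co where co: "\<forall>k. goodcol E k (Lo k) (co k)" by metis
  have noloop': "\<forall>v. (v,v) \<notin> E\<inverse>" using noloop by blast
  have "\<forall>k. \<exists>c. goodcol (E\<inverse>) k (Li k) c"
  proof
    fix k
    have LW: "Li k \<subseteq> W" unfolding Li_def by blast
    show "\<exists>c. goodcol (E\<inverse>) k (Li k) c"
    proof (rule layer_col[OF noloop'])
      show "\<forall>v\<in>Li k. \<forall>w\<in>Li k. D v \<subseteq> D w \<or> D w \<subseteq> D v" using lin LW by blast
      show "\<forall>v\<in>Li k. \<forall>w\<in>Li k. v \<in> D w \<longrightarrow> D v \<subseteq> D w" using cons LW by blast
      show "\<forall>v\<in>Li k. \<forall>w\<in>Li k. D v = D w \<longrightarrow> v = w" using inj LW by blast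
      show "\<forall>v\<in>Li k. finite {s\<in>Li k. (v,s)\<in>E\<inverse> \<and> s \<notin> D v} \<and> card {s\<in>Li k. (v,s)\<in>E\<inverse> \<and> s \<notin> D v} \<le> k"
      proof
        fix v assume v: "v \<in> Li k"
        have sub: "{s\<in>Li k. (v,s)\<in>E\<inverse> \<and> s \<notin> D v} \<subseteq> in_nbrs E v \<inter> fw v"
          unfolding fw_def in_nbrs_def using LW by blast
        have f: "finite (in_nbrs E v \<inter> fw v)" "card (in_nbrs E v \<inter> fw v) \<le> k" using v unfolding Li_def by blast+
        show "finite {s\<in>Li k. (v,s)\<in>E\<inverse> \<and> s \<notin> D v} \<and> card {s\<in>Li k. (v,s)\<in>E\<inverse> \<and> s \<notin> D v} \<le> k"
          using finite_subset[OF sub f(1)] card_mono[OF f(1) sub] f(2) by linarith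
      qed
    qed
  qed
  then obtain ci where ci: "\<forall>k. goodcol (E\<inverse>) k (Li k) (ci k)" by metis
  define C where "C = (\<lambda>(k,j). {x\<in>Lo k. co k x = j}) ` (UNIV :: (nat \<times> nat) set)
      \<union> (\<lambda>(k,j). {x\<in>Li k. ci k x = j}) ` (UNIV :: (nat \<times> nat) set)"
  have "countable C" unfolding C_def by blast
  moreover have "\<forall>A\<in>C. A \<subseteq> W \<and> acyclic (E \<inter> A \<times> A)"
  proof
    fix A assume "A \<in> C"
    then consider k j where "A = {x\<in>Lo k. co k x = j}" | k j where "A = {x\<in>Li k. ci k x = j}"
      unfolding C_def by auto
    then show "A \<subseteq> W \<and> acyclic (E \<inter> A \<times> A)"
    proof cases
      case 1
      have "acyclic (E \<inter> A \<times> A)" using co unfolding goodcol_def 1 by blast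
      moreover have "A \<subseteq> W" unfolding 1 Lo_def by blast
      ultimately show ?thesis by blast
    next
      case 2
      have a: "acyclic (E\<inverse> \<inter> A \<times> A)" using ci unfolding goodcol_def 2 by blast
      have "E\<inverse> \<inter> A \<times> A = (E \<inter> A \<times> A)\<inverse>" by blast
      then have "acyclic (E \<inter> A \<times> A)" using a by simp
      moreover have "A \<subseteq> W" unfolding 2 Li_def by blast
      ultimately show ?thesis by blast
    qed
  qed
  moreover have "W \<subseteq> \<Union>C"
  proof
    fix v assume v: "v \<in> W"
    have "fincond E W v (D v)" using fc v by blast
    then have "finite (out_nbrs E v \<inter> fw v) \<or> finite (in_nbrs E v \<inter> fw v)"
      unfolding fincond_def fw_def .
    then show "v \<in> \<Union>C"
    proof
      assume f: "finite (out_nbrs E v \<inter> fw v)"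
      define k where "k = card (out_nbrs E v \<inter> fw v)"
      have "v \<in> Lo k" unfolding Lo_def k_def using f v by blast
      then have "v \<in> {x\<in>Lo k. co k x = co k v}" by blast
      moreover have "{x\<in>Lo k. co k x = co k v} \<in> C" unfolding C_def by force
      ultimately show ?thesis by blast
    next
      assume f: "finite (in_nbrs E v \<inter> fw v)"
      define k where "k = card (in_nbrs E v \<inter> fw v)"
      have "v \<in> Li k" unfolding Li_def k_def using f v by blast
      then have "v \<in> {x\<in>Li k. ci k x = ci k v}" by blast
      moreover have "{x\<in>Li k. ci k x = ci k v} \<in> C" unfolding C_def by force
      ultimately show ?thesis by blast
    qed
  qed
  ultimately show ?thesis by blast
qed

theorem proposition3p1:
  fixes V :: "'a set" and E :: "('a \<times> 'a) set"
  assumes "digraph V E"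
    and "\<not> dichromatic_le_omega V E"
  shows "\<exists>V0 E0. subdigraph V0 E0 V E \<and> \<not> dichromatic_le_omega V0 E0 \<and>
           (\<forall>v\<in>V0. infinite (in_nbrs E0 v) \<and> infinite (out_nbrs E0 v))"
proof -
  have EV: "E \<subseteq> V \<times> V" and anti: "\<forall>u v. (u, v) \<in> E \<longrightarrow> (v, u) \<notin> E"
    using assms(1) unfolding digraph_def by blast+
  have noloop: "\<forall>v. (v,v) \<notin> E" using anti by blast
  define good where "good S \<longleftrightarrow> S \<subseteq> V \<and> (\<forall>v\<in>S. infinite (in_nbrs E v \<inter> S) \<and> infinite (out_nbrs E v \<inter> S))" for S
  define V0 where "V0 = \<Union>{S. good S}"
  define E0 where "E0 = E \<inter> V0 \<times> V0"
  have V0V: "V0 \<subseteq> V" unfolding V0_def good_def by blast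
  have deg: "\<forall>v\<in>V0. infinite (in_nbrs E v \<inter> V0) \<and> infinite (out_nbrs E v \<inter> V0)"
  proof
    fix v assume "v \<in> V0"
    then obtain S where S: "good S" "v \<in> S" unfolding V0_def by blast
    have SV0: "S \<subseteq> V0" using S(1) unfolding V0_def by blast
    have "infinite (in_nbrs E v \<inter> S)" "infinite (out_nbrs E v \<inter> S)" using S unfolding good_def by blast+
    moreover have "in_nbrs E v \<inter> S \<subseteq> in_nbrs E v \<inter> V0" "out_nbrs E v \<inter> S \<subseteq> out_nbrs E v \<inter> V0" using SV0 by blast+
    ultimately show "infinite (in_nbrs E v \<inter> V0) \<and> infinite (out_nbrs E v \<inter> V0)"
      using finite_subset by blast
  qed
  show ?thesis
  proof (cases "dichromatic_le_omega V0 E0")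
    case False
    have "subdigraph V0 E0 V E"
      unfolding subdigraph_def digraph_def E0_def using V0V anti by blast
    moreover have "\<forall>v\<in>V0. infinite (in_nbrs E0 v) \<and> infinite (out_nbrs E0 v)"
    proof
      fix v assume v: "v \<in> V0"
      have "in_nbrs E0 v = in_nbrs E v \<inter> V0" "out_nbrs E0 v = out_nbrs E v \<inter> V0"
        unfolding in_nbrs_def out_nbrs_def E0_def using v by blast+
      then show "infinite (in_nbrs E0 v) \<and> infinite (out_nbrs E0 v)" using deg v by simp
    qed
    ultimately show ?thesis using False by blast
  next
    case True
    then obtain C0 where C0: "countable C0" "\<forall>A\<in>C0. acyclic_set V0 E0 A" "V0 \<subseteq> \<Union>C0"
      unfolding dichromatic_le_omega_def by blast
    define W where "W = V - V0"
    have hered: "\<forall>S. S \<subseteq> W \<longrightarrow> S \<noteq> {} \<longrightarrow> (\<exists>u\<in>S. finite (out_nbrs E u \<inter> S) \<or> finite (in_nbrs E u \<inter> S))"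
    proof (intro allI impI)
      fix S assume S: "S \<subseteq> W" "S \<noteq> {}"
      show "\<exists>u\<in>S. finite (out_nbrs E u \<inter> S) \<or> finite (in_nbrs E u \<inter> S)"
      proof (rule ccontr)
        assume "\<not> ?thesis"
        then have "good S" using S(1) unfolding good_def W_def by blast
        then have "S \<subseteq> V0" unfolding V0_def by blast
        then show False using S unfolding W_def by blast
      qed
    qed
    obtain CW where CW: "countable CW" "\<forall>A\<in>CW. A \<subseteq> W \<and> acyclic (E \<inter> A \<times> A)" "W \<subseteq> \<Union>CW"
      using hered_colorable[OF noloop hered] by blast
    have "\<forall>A\<in>C0 \<union> CW. acyclic_set V E A"
    proof
      fix A assume "A \<in> C0 \<union> CW"
      then show "acyclic_set V E A"
      proof
        assume A: "A \<in> C0"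
        then have AV0: "A \<subseteq> V0" and ac: "acyclic (E0 \<inter> A \<times> A)" using C0(2) unfolding acyclic_set_def by blast+
        have eq: "E0 \<inter> A \<times> A = E \<inter> A \<times> A" unfolding E0_def using AV0 by blast
        have "acyclic (E \<inter> A \<times> A)" using ac unfolding eq .
        moreover have "A \<subseteq> V" using AV0 V0V by (rule subset_trans)
        ultimately show ?thesis unfolding acyclic_set_def by (rule conjI[rotated])
      next
        assume A: "A \<in> CW"
        then have "A \<subseteq> W \<and> acyclic (E \<inter> A \<times> A)" using CW(2) by (rule bspec[rotated])
        moreover have "W \<subseteq> V" unfolding W_def by (rule Diff_subset)
        ultimately show ?thesis unfolding acyclic_set_def by (meson subset_trans)
      qed
    qed
    moreover have "countable (C0 \<union> CW)" using C0(1) CW(1) by blast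
    moreover have "V \<subseteq> \<Union>(C0 \<union> CW)" using C0(3) CW(3) unfolding W_def by blast
    ultimately have "dichromatic_le_omega V E" unfolding dichromatic_le_omega_def by blast
    then show ?thesis using assms(2) by blast
  qed
qed

end
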